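(* Let $Y\subset\mathbb{R}^n$ be open, and let $\omega\colon Y\to\mathbb{R}^n$, $f\colon Y\to\mathbb{R}^n$, $F\colon Y\to\mathbb{R}$, $H\colon Y\to\mathbb{R}^{n\times m}$, $g\colon Y\to\mathbb{R}^m$, $f^{\mathrm{num}}\colon Y\times Y\to\mathbb{R}^n$, $H^{\mathrm{num}}\colon Y\times Y\to\mathbb{R}^{n\times m}$ be arbitrary with $f^{\mathrm{num}}(u,u)=f(u)$ and $H^{\mathrm{num}}(u,u)=H(u)$. Then the following are equivalent: (A) there exists $F^{\mathrm{num}}\colon Y\times Y\to\mathbb{R}$ with $F^{\mathrm{num}}(u,u)=F(u)$ such that for all $u_-,u_0,u_+\in Y$, $$\omega(u_0)\cdot\Big(f^{\mathrm{num}}(u_0,u_+)-f^{\mathrm{num}}(u_-,u_0)+\tfrac12H^{\mathrm{num}}(u_0,u_+)\big(g(u_+)-g(u_0)\big)+\tfrac12H^{\mathrm{num}}(u_-,u_0)\big(g(u_0)-g(u_-)\big)\Big)\ \ge\ F^{\mathrm{num}}(u_0,u_+)-F^{\mathrm{num}}(u_-,u_0);$$ (B) for all $u_-,u_+\in Y$, $$[\![\omega]\!]\cdot f^{\mathrm{num}}(u_-,u_+)-\{\{\omega\}\}\cdot H^{\mathrm{num}}(u_-,u_+)\,[\![g]\!]\ \le\ [\![\omega\cdot f-F]\!].$$ Moreover, there exists a consistent $F^{\mathrm{num}}$ with equality in (A) for all triples iff (B) holds with equality for all pairs, and then $$F^{\mathrm{num}}=\{\{F\}\}+\{\{\omega\}\}\cdot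 f^{\mathrm{num}}-\{\{\omega\cdot f\}\}-\tfrac14[\![\omega]\!]\cdot H^{\mathrm{num}}[\![g]\!].$$
   Context: For a function $a$ on $Y$ and states $u_\pm$: $\{\{a\}\}=\tfrac12(a(u_-)+a(u_+))$, $[\![a]\!]=a(u_+)-a(u_-)$; numerical fluxes are evaluated at $(u_-,u_+)$. *)

theory Defs
  imports "HOL-Analysis.Analysis"
begin

end

theory Submission
  imports Defs
begin

theorem mainTheorem6:
  fixes Y :: "(real^'n) set"
    and \<omega> f :: "real^'n \<Rightarrow> real^'n"
    and F :: "real^'n \<Rightarrow> real"
    and H :: "real^'n \<Rightarrow> real^'m^'n"
    and g :: "real^'n \<Rightarrow> real^'m"
    and fnum :: "real^'n \<Rightarrow> real^'n \<Rightarrow> real^'n"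
    and Hnum :: "real^'n \<Rightarrow> real^'n \<Rightarrow> real^'m^'n"
  assumes "open Y"
    and "\<forall>u\<in>Y. fnum u u = f u"
    and "\<forall>u\<in>Y. Hnum u u = H u"
  shows
   "((\<exists>Fnum :: real^'n \<Rightarrow> real^'n \<Rightarrow> real.
        (\<forall>u\<in>Y. Fnum u u = F u) \<and>
        (\<forall>um\<in>Y. \<forall>u0\<in>Y. \<forall>up\<in>Y.
           \<omega> u0 \<bullet> (fnum u0 up - fnum um u0
               + (1/2) *\<^sub>R (Hnum u0 up *v (g up - g u0))
               + (1/2) *\<^sub>R (Hnum um u0 *v (g u0 - g um)))
           \<ge> Fnum u0 up - Fnum um u0))
     \<longleftrightarrow>
     (\<forall>um\<in>Y. \<forall>up\<in>Y.
        (\<omega> up - \<omega> um) \<bullet> fnum um up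
          - ((1/2) *\<^sub>R (\<omega> um + \<omega> up)) \<bullet> (Hnum um up *v (g up - g um))
        \<le> (\<omega> up \<bullet> f up - F up) - (\<omega> um \<bullet> f um - F um)))
    \<and>
    ((\<exists>Fnum :: real^'n \<Rightarrow> real^'n \<Rightarrow> real.
        (\<forall>u\<in>Y. Fnum u u = F u) \<and>
        (\<forall>um\<in>Y. \<forall>u0\<in>Y. \<forall>up\<in>Y.
           \<omega> u0 \<bullet> (fnum u0 up - fnum um u0
               + (1/2) *\<^sub>R (Hnum u0 up *v (g up - g u0))
               + (1/2) *\<^sub>R (Hnum um u0 *v (g u0 - g um)))
           = Fnum u0 up - Fnum um u0))
     \<longleftrightarrow>
     (\<forall>um\<in>Y. \<forall>up\<in>Y.
        (\<omega> up - \<omega> um) \<bullet> fnum um up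
          - ((1/2) *\<^sub>R (\<omega> um + \<omega> up)) \<bullet> (Hnum um up *v (g up - g um))
        = (\<omega> up \<bullet> f up - F up) - (\<omega> um \<bullet> f um - F um)))
    \<and>
    (\<forall>Fnum :: real^'n \<Rightarrow> real^'n \<Rightarrow> real.
        ((\<forall>u\<in>Y. Fnum u u = F u) \<and>
         (\<forall>um\<in>Y. \<forall>u0\<in>Y. \<forall>up\<in>Y.
           \<omega> u0 \<bullet> (fnum u0 up - fnum um u0
               + (1/2) *\<^sub>R (Hnum u0 up *v (g up - g u0))
               + (1/2) *\<^sub>R (Hnum um u0 *v (g u0 - g um)))
           = Fnum u0 up - Fnum um u0))
        \<longrightarrow>
        (\<forall>um\<in>Y. \<forall>up\<in>Y.
           Fnum um up = (F um + F up) / 2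
             + ((1/2) *\<^sub>R (\<omega> um + \<omega> up)) \<bullet> fnum um up
             - (\<omega> um \<bullet> f um + \<omega> up \<bullet> f up) / 2
             - (1/4) * ((\<omega> up - \<omega> um) \<bullet> (Hnum um up *v (g up - g um)))))"
proof -
  note fu = assms(2)
  define X where "X = (\<lambda>u v. \<omega> u \<bullet> (Hnum u v *v (g v - g u)))"
  define Z where "Z = (\<lambda>u v. \<omega> v \<bullet> (Hnum u v *v (g v - g u)))"
  have X0: "X u u = 0" "Z u u = 0" for u by (simp_all add: X_def Z_def)
  have eA: "\<omega> u0 \<bullet> (fnum u0 up - fnum um u0
               + (1/2) *\<^sub>R (Hnum u0 up *v (g up - g u0))
               + (1/2) *\<^sub>R (Hnum um u0 *v (g u0 - g um)))
        = \<omega> u0 \<bullet> fnum u0 up - \<omega> u0 \<bullet> fnum um u0 + X u0 up / 2 + Z um u0 / 2" for um u0 up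
    by (simp add: X_def Z_def inner_add_right inner_diff_right)
  have eB: "(\<omega> up - \<omega> um) \<bullet> fnum um up
          - ((1/2) *\<^sub>R (\<omega> um + \<omega> up)) \<bullet> (Hnum um up *v (g up - g um))
        = \<omega> up \<bullet> fnum um up - \<omega> um \<bullet> fnum um up - X um up / 2 - Z um up / 2" for um up
    by (simp add: X_def Z_def inner_add_left inner_diff_left field_simps)
  have eC: "((1/2) *\<^sub>R (\<omega> um + \<omega> up)) \<bullet> fnum um up = (\<omega> um \<bullet> fnum um up + \<omega> up \<bullet> fnum um up)/2"
    "(\<omega> up - \<omega> um) \<bullet> (Hnum um up *v (g up - g um)) = Z um up - X um up" for um up
    by (simp_all add: X_def Z_def inner_add_left inner_diff_left)
  define G where "G = (\<lambda>u v. \<omega> u \<bullet> fnum u v + X u v / 2 - \<omega> u \<bullet> f u + F u)"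
  have GF: "\<forall>u\<in>Y. G u u = F u" using fu X0 by (simp add: G_def)
  have P1: "(\<exists>Fn. (\<forall>u\<in>Y. Fn u u = F u) \<and> (\<forall>um\<in>Y. \<forall>u0\<in>Y. \<forall>up\<in>Y.
       \<omega> u0 \<bullet> fnum u0 up - \<omega> u0 \<bullet> fnum um u0 + X u0 up / 2 + Z um u0 / 2 \<ge> Fn u0 up - Fn um u0))
     \<longleftrightarrow> (\<forall>um\<in>Y. \<forall>up\<in>Y. \<omega> up \<bullet> fnum um up - \<omega> um \<bullet> fnum um up - X um up / 2 - Z um up / 2
        \<le> (\<omega> up \<bullet> f up - F up) - (\<omega> um \<bullet> f um - F um))" (is "(\<exists>Fn. ?a Fn) \<longleftrightarrow> (\<forall>um\<in>Y. \<forall>up\<in>Y. ?b um up)")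
  proof
    assume "\<exists>Fn. ?a Fn"
    then obtain Fn where h1: "\<forall>u\<in>Y. Fn u u = F u" and h2: "\<forall>um\<in>Y. \<forall>u0\<in>Y. \<forall>up\<in>Y.
       \<omega> u0 \<bullet> fnum u0 up - \<omega> u0 \<bullet> fnum um u0 + X u0 up / 2 + Z um u0 / 2 \<ge> Fn u0 up - Fn um u0" by blast
    show "\<forall>um\<in>Y. \<forall>up\<in>Y. ?b um up"
    proof (intro ballI)
      fix u v assume u: "u \<in> Y" and v: "v \<in> Y"
      have 1: "\<omega> u \<bullet> fnum u v - \<omega> u \<bullet> fnum u u + X u v / 2 + Z u u / 2 \<ge> Fn u v - Fn u u" using h2 u v by blast
      have 2: "\<omega> v \<bullet> fnum v v - \<omega> v \<bullet> fnum u v + X v v / 2 + Z u v / 2 \<ge> Fn v v - Fn u v" using h2 u v by blast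
      show "?b u v" using 1 2 X0 h1 fu u v by simp
    qed
  next
    assume h: "\<forall>um\<in>Y. \<forall>up\<in>Y. ?b um up"
    show "\<exists>Fn. ?a Fn"
    proof (rule exI[of _ G], intro conjI ballI)
      show "G u u = F u" if "u \<in> Y" for u using GF that by blast
      fix um u0 up assume ym: "um \<in> Y" and y0: "u0 \<in> Y" and "up \<in> Y"
      have hh: "?b um u0" using h ym y0 by blast
      show "\<omega> u0 \<bullet> fnum u0 up - \<omega> u0 \<bullet> fnum um u0 + X u0 up / 2 + Z um u0 / 2 \<ge> G u0 up - G um u0"
        using hh by (simp add: G_def)
    qed
  qed
  have P2: "(\<exists>Fn. (\<forall>u\<in>Y. Fn u u = F u) \<and> (\<forall>um\<in>Y. \<forall>u0\<in>Y. \<forall>up\<in>Y.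
       \<omega> u0 \<bullet> fnum u0 up - \<omega> u0 \<bullet> fnum um u0 + X u0 up / 2 + Z um u0 / 2 = Fn u0 up - Fn um u0))
     \<longleftrightarrow> (\<forall>um\<in>Y. \<forall>up\<in>Y. \<omega> up \<bullet> fnum um up - \<omega> um \<bullet> fnum um up - X um up / 2 - Z um up / 2
        = (\<omega> up \<bullet> f up - F up) - (\<omega> um \<bullet> f um - F um))" (is "(\<exists>Fn. ?a Fn) \<longleftrightarrow> (\<forall>um\<in>Y. \<forall>up\<in>Y. ?b um up)")
  proof
    assume "\<exists>Fn. ?a Fn"
    then obtain Fn where h1: "\<forall>u\<in>Y. Fn u u = F u" and h2: "\<forall>um\<in>Y. \<forall>u0\<in>Y. \<forall>up\<in>Y.
       \<omega> u0 \<bullet> fnum u0 up - \<omega> u0 \<bullet> fnum um u0 + X u0 up / 2 + Z um u0 / 2 = Fn u0 up - Fn um u0" by blast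
    show "\<forall>um\<in>Y. \<forall>up\<in>Y. ?b um up"
    proof (intro ballI)
      fix u v assume u: "u \<in> Y" and v: "v \<in> Y"
      have 1: "\<omega> u \<bullet> fnum u v - \<omega> u \<bullet> fnum u u + X u v / 2 + Z u u / 2 = Fn u v - Fn u u" using h2 u v by blast
      have 2: "\<omega> v \<bullet> fnum v v - \<omega> v \<bullet> fnum u v + X v v / 2 + Z u v / 2 = Fn v v - Fn u v" using h2 u v by blast
      show "?b u v" using 1 2 X0 h1 fu u v by simp
    qed
  next
    assume h: "\<forall>um\<in>Y. \<forall>up\<in>Y. ?b um up"
    show "\<exists>Fn. ?a Fn"
    proof (rule exI[of _ G], intro conjI ballI)
      show "G u u = F u" if "u \<in> Y" for u using GF that by blast
      fix um u0 up assume ym: "um \<in> Y" and y0: "u0 \<in> Y" and "up \<in> Y"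
      have hh: "?b um u0" using h ym y0 by blast
      show "\<omega> u0 \<bullet> fnum u0 up - \<omega> u0 \<bullet> fnum um u0 + X u0 up / 2 + Z um u0 / 2 = G u0 up - G um u0"
        using hh by (simp add: G_def)
    qed
  qed
  have P3: "\<forall>Fn. ((\<forall>u\<in>Y. Fn u u = F u) \<and> (\<forall>um\<in>Y. \<forall>u0\<in>Y. \<forall>up\<in>Y.
       \<omega> u0 \<bullet> fnum u0 up - \<omega> u0 \<bullet> fnum um u0 + X u0 up / 2 + Z um u0 / 2 = Fn u0 up - Fn um u0))
     \<longrightarrow> (\<forall>um\<in>Y. \<forall>up\<in>Y. Fn um up = (F um + F up) / 2
             + (\<omega> um \<bullet> fnum um up + \<omega> up \<bullet> fnum um up)/2
             - (\<omega> um \<bullet> f um + \<omega> up \<bullet> f up) / 2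
             - (1/4) * (Z um up - X um up))" (is "\<forall>Fn. ?a Fn \<longrightarrow> (\<forall>um\<in>Y. \<forall>up\<in>Y. ?c Fn um up)")
  proof (intro allI impI ballI)
    fix Fn u v assume H: "?a Fn" and u: "u \<in> Y" and v: "v \<in> Y"
    then have h1: "\<forall>u\<in>Y. Fn u u = F u" and h2: "\<forall>um\<in>Y. \<forall>u0\<in>Y. \<forall>up\<in>Y.
       \<omega> u0 \<bullet> fnum u0 up - \<omega> u0 \<bullet> fnum um u0 + X u0 up / 2 + Z um u0 / 2 = Fn u0 up - Fn um u0" by blast+
    have 1: "\<omega> u \<bullet> fnum u v - \<omega> u \<bullet> fnum u u + X u v / 2 + Z u u / 2 = Fn u v - Fn u u" using h2 u v by blast
    have 2: "\<omega> v \<bullet> fnum v v - \<omega> v \<bullet> fnum u v + X v v / 2 + Z u v / 2 = Fn v v - Fn u v" using h2 u v by blast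
    show "?c Fn u v" using 1 2 X0 h1 fu u v by (simp add: field_simps)
  qed
  show ?thesis unfolding eA eB eC using P1 P2 P3 by blast
qed

end
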